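(* For even $m\ge 18$, let $G^{\mathrm{mix}}_m$ be the graph with vertex set $\{u^*\}\cup\{a\}\cup B\cup\{z,x,y\}\cup L$, where $\{a\}\cup B$ with $|B|=3$ induces a $K_4$, $|L|=m-14$, $u^*$ is adjacent to every vertex of $\{a\}\cup B\cup\{z\}\cup L$, and the remaining edges are exactly $ax$, $xy$, $yz$ (so $G^{\mathrm{mix}}_m$ has $m$ edges). Its spectral radius equals the largest root of \[ f_{\mathrm{mix}}(x)=x^7-2x^6+(3-m)x^5+(2m-24)x^4+(6m-61)x^3+(84-6m)x^2+(90-7m)x+2m-28, \] and $\rho(G^{\mathrm{mix}}_m)<\rho'(m)$.
   Context: $\rho(G)$ denotes the adjacency spectral radius. For even $m$, $\rho'(m)$ is the largest real root of $p_m(x)=x^4-mx^2-(m-2)x+\frac{m}{2}-1$. *)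

theory Defs
  imports "Jordan_Normal_Form.Spectral_Radius"
begin

text \<open>Vertex labelling of G^mix_m on {0..<m-6}:
  0 = u*, 1 = a, 2,3,4 = B, 5 = z, 6 = x, 7 = y, 8..m-7 = L (m-14 vertices).\<close>

definition mix_edges :: "nat \<Rightarrow> nat set set" where
  "mix_edges m =
     {{1,2},{1,3},{1,4},{2,3},{2,4},{3,4}}
   \<union> {{0,v} | v. v \<in> {1,2,3,4,5} \<union> {8..<m-6}}
   \<union> {{1,6},{6,7},{7,5}}"

definition mix_adj_mat :: "nat \<Rightarrow> complex mat" where
  "mix_adj_mat m = mat (m-6) (m-6) (\<lambda>(i,j). if {i,j} \<in> mix_edges m then 1 else 0)"

definition f_mix :: "nat \<Rightarrow> real \<Rightarrow> real" where
  "f_mix m x = x^7 - 2*x^6 + (3 - real m)*x^5 + (2*real m - 24)*x^4 + (6*real m - 61)*x^3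
     + (84 - 6*real m)*x^2 + (90 - 7*real m)*x + 2*real m - 28"

definition p_m :: "nat \<Rightarrow> real \<Rightarrow> real" where
  "p_m m x = x^4 - real m * x^2 - (real m - 2)*x + real m / 2 - 1"

definition rho' :: "nat \<Rightarrow> real" where
  "rho' m = Max {x. p_m m x = 0}"

end

theory Submission
  imports Defs
begin

lemma pos_l: fixes x :: real assumes "x \<ge> 21/5"
  shows "x^5 - 2*x^4 - 6*x^3 + 6*x^2 + 7*x - 2 > 0"
proof -
  define t where "t = x - 21/5"
  have t: "t \<ge> 0" using assms t_def by simp
  have x: "x = t + 21/5" using t_def by simp
  have "x^5 - 2*x^4 - 6*x^3 + 6*x^2 + 7*x - 2 = (1166516/3125)*t^0 + (87878/125)*t^1 + (2298/5)*t^2 + (684/5)*t^3 + (19)*t^4 + (1)*t^5"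
    unfolding x by (simp add: eval_nat_numeral field_simps)
  also have "\<dots> > 0" using t by (simp add: add_pos_nonneg)
  finally show ?thesis .
qed

lemma pos_a: fixes x :: real assumes "x \<ge> 21/5"
  shows "x^5 + x^4 - 2*x^3 - x^2 - 2*x > 0"
proof -
  define t where "t = x - 21/5"
  have t: "t \<ge> 0" using assms t_def by simp
  have x: "x = t + 21/5" using t_def by simp
  have "x^5 + x^4 - 2*x^3 - x^2 - 2*x = (4512081/3125)*t^0 + (43399/25)*t^1 + (20513/25)*t^2 + (956/5)*t^3 + (22)*t^4 + (1)*t^5"
    unfolding x by (simp add: eval_nat_numeral field_simps)
  also have "\<dots> > 0" using t by (simp add: add_pos_nonneg)
  finally show ?thesis .
qed

lemma pos_b: fixes x :: real assumes "x \<ge> 21/5"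
  shows "x^5 + x^4 - 3*x^3 - 2*x^2 + 2*x > 0"
proof -
  define t where "t = x - 21/5"
  have t: "t \<ge> 0" using assms t_def by simp
  have x: "x = t + 21/5" using t_def by simp
  have "x^5 + x^4 - 3*x^3 - 2*x^2 + 2*x = (4277931/3125)*t^0 + (41966/25)*t^1 + (20173/25)*t^2 + (951/5)*t^3 + (22)*t^4 + (1)*t^5"
    unfolding x by (simp add: eval_nat_numeral field_simps)
  also have "\<dots> > 0" using t by (simp add: add_pos_nonneg)
  finally show ?thesis .
qed

lemma pos_x: fixes x :: real assumes "x \<ge> 21/5"
  shows "x^4 + 2*x^3 - 3*x^2 - 4*x > 0"
proof -
  define t where "t = x - 21/5"
  have t: "t \<ge> 0" using assms t_def by simp
  have x: "x = t + 21/5" using t_def by simp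
  have "x^4 + 2*x^3 - 3*x^2 - 4*x = (243516/625)*t^0 + (46624/125)*t^1 + (3201/25)*t^2 + (94/5)*t^3 + (1)*t^4"
    unfolding x by (simp add: eval_nat_numeral field_simps)
  also have "\<dots> > 0" using t by (simp add: add_pos_nonneg)
  finally show ?thesis .
qed

lemma pos_y: fixes x :: real assumes "x \<ge> 21/5"
  shows "x^4 - x^3 - 3*x^2 + 2*x > 0"
proof -
  define t where "t = x - 21/5"
  have t: "t \<ge> 0" using assms t_def by simp
  have x: "x = t + 21/5" using t_def by simp
  have "x^4 - x^3 - 3*x^2 + 2*x = (120351/625)*t^0 + (27529/125)*t^1 + (2256/25)*t^2 + (79/5)*t^3 + (1)*t^4"
    unfolding x by (simp add: eval_nat_numeral field_simps)
  also have "\<dots> > 0" using t by (simp add: add_pos_nonneg)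
  finally show ?thesis .
qed

lemma pos_z: fixes x :: real assumes "x \<ge> 21/5"
  shows "x^5 - 2*x^4 - 5*x^3 + 5*x^2 + 4*x > 0"
proof -
  define t where "t = x - 21/5"
  have t: "t \<ge> 0" using assms t_def by simp
  have x: "x = t + 21/5" using t_def by simp
  have "x^5 - 2*x^4 - 5*x^3 + 5*x^2 + 4*x = (1309791/3125)*t^0 + (93068/125)*t^1 + (2356/5)*t^2 + (689/5)*t^3 + (19)*t^4 + (1)*t^5"
    unfolding x by (simp add: eval_nat_numeral field_simps)
  also have "\<dots> > 0" using t by (simp add: add_pos_nonneg)
  finally show ?thesis .
qed

lemma pos_D: fixes x :: real assumes "x \<ge> 21/5"
  shows "2*x^8 + 13*x^7 - 56*x^6 - 177*x^5 + 94*x^4 + 373*x^3 + 24*x^2 - 124*x + 24 > 0"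
proof -
  define t where "t = x - 21/5"
  have t: "t \<ge> 0" using assms t_def by simp
  have x: "x = t + 21/5" using t_def by simp
  have "2*x^8 + 13*x^7 - 56*x^6 - 177*x^5 + 94*x^4 + 373*x^3 + 24*x^2 - 124*x + 24 = (4475094237/390625)*t^0 + (15744612061/78125)*t^1 + (4473865266/15625)*t^2 + (549084962/3125)*t^3 + (7354148/125)*t^4 + (1440672/125)*t^5 + (32851/25)*t^6 + (401/5)*t^7 + (2)*t^8"
    unfolding x by (simp add: eval_nat_numeral field_simps)
  also have "\<dots> > 0" using t by (simp add: add_pos_nonneg)
  finally show ?thesis .
qed


lemma mv_index:
  assumes A: "A \<in> carrier_mat n n" and v: "v \<in> carrier_vec n" and i: "i < n"
  shows "(A *\<^sub>v v) $ i = (\<Sum>j<n. A $$ (i,j) * v $ j)"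
  using A v i by (auto simp: scalar_prod_def lessThan_atLeast0 intro!: sum.cong)

lemma collatz:
  fixes A :: "complex mat" and c :: "nat \<Rightarrow> nat \<Rightarrow> real" and w :: "nat \<Rightarrow> real"
  assumes A: "A \<in> carrier_mat n n"
  and Ac: "\<And>i j. i<n \<Longrightarrow> j<n \<Longrightarrow> A $$ (i,j) = of_real (c i j)"
  and c0: "\<And>i j. i<n \<Longrightarrow> j<n \<Longrightarrow> c i j \<ge> 0"
  and w0: "\<And>i. i<n \<Longrightarrow> w i > 0"
  and Aw: "\<And>i. i<n \<Longrightarrow> (\<Sum>j<n. c i j * w j) = r * w i"
  and ev: "eigenvector A v lam"
  shows "norm lam \<le> r"
proof -
  have v: "v \<in> carrier_vec n" and vnz: "v \<noteq> 0\<^sub>v n" and Av: "A *\<^sub>v v = lam \<cdot>\<^sub>v v"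
    using ev A unfolding eigenvector_def by auto
  obtain k where k: "k < n" "v $ k \<noteq> 0"
    using vnz v by (metis eq_vecI carrier_vecD index_zero_vec(1,2))
  define S where "S = (\<lambda>j. norm (v$j) / w j) ` {..<n}"
  have finS: "finite S" and neS: "S \<noteq> {}" using k unfolding S_def by auto
  define t where "t = Max S"
  obtain i where i: "i < n" "t = norm (v$i) / w i"
    using Max_in[OF finS neS] unfolding t_def S_def by auto
  have bound: "norm (v$j) \<le> t * w j" if "j < n" for j
  proof -
    have "norm (v$j) / w j \<le> t" unfolding t_def S_def using that by (intro Max_ge) auto
    thus ?thesis using w0[OF that] by (simp add: divide_le_eq)
  qed
  have "norm (v$k) / w k > 0" using k w0[of k] by simp
  also have "norm (v$k) / w k \<le> t" unfolding t_def S_def using k by (intro Max_ge) auto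
  finally have tpos: "t > 0" .
  have vi: "norm (v$i) = t * w i" using i w0[of i] by simp
  have vipos: "norm (v$i) > 0" using vi tpos w0[OF i(1)] by simp
  have "lam * v$i = (A *\<^sub>v v) $ i" using Av i v by simp
  also have "\<dots> = (\<Sum>j<n. of_real (c i j) * v $ j)" using mv_index[OF A v i(1)] Ac i by simp
  finally have eq: "lam * v$i = (\<Sum>j<n. of_real (c i j) * v $ j)" .
  have "norm lam * norm (v$i) = norm (\<Sum>j<n. of_real (c i j) * v $ j)" using eq by (metis norm_mult)
  also have "\<dots> \<le> (\<Sum>j<n. norm (of_real (c i j) * v $ j))" by (rule norm_sum)
  also have "\<dots> = (\<Sum>j<n. c i j * norm (v $ j))" using c0 i by (intro sum.cong) (auto simp: norm_mult)
  also have "\<dots> \<le> (\<Sum>j<n. c i j * (t * w j))" using c0 i bound by (intro sum_mono mult_left_mono) auto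
  also have "\<dots> = t * (\<Sum>j<n. c i j * w j)" by (simp add: sum_distrib_left algebra_simps)
  also have "\<dots> = r * norm (v$i)" using Aw[OF i(1)] vi by simp
  finally have "norm lam * norm (v$i) \<le> r * norm (v$i)" .
  thus ?thesis using vipos by simp
qed

lemma eigen_of_real:
  fixes A :: "complex mat" and c :: "nat \<Rightarrow> nat \<Rightarrow> real" and w :: "nat \<Rightarrow> real"
  assumes A: "A \<in> carrier_mat n n"
  and Ac: "\<And>i j. i<n \<Longrightarrow> j<n \<Longrightarrow> A $$ (i,j) = of_real (c i j)"
  and k: "k < n" "w k \<noteq> 0"
  and Aw: "\<And>i. i<n \<Longrightarrow> (\<Sum>j<n. c i j * w j) = r * w i"
  shows "eigenvalue A (of_real r)"
proof -
  define v where "v = vec n (\<lambda>i. complex_of_real (w i))"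
  have v: "v \<in> carrier_vec n" unfolding v_def by simp
  have "v \<noteq> 0\<^sub>v n" using k unfolding v_def
    by (metis index_vec index_zero_vec(1) of_real_eq_0_iff)
  moreover have "A *\<^sub>v v = of_real r \<cdot>\<^sub>v v"
  proof (rule eq_vecI)
    fix i assume i: "i < dim_vec (of_real r \<cdot>\<^sub>v v)"
    hence i: "i < n" using v by simp
    have "(A *\<^sub>v v) $ i = (\<Sum>j<n. A $$ (i,j) * v $ j)" by (rule mv_index[OF A v i])
    also have "\<dots> = (\<Sum>j<n. of_real (c i j * w j))" using Ac i unfolding v_def by (intro sum.cong) auto
    also have "\<dots> = of_real (r * w i)" using Aw[OF i] by (metis of_real_sum)
    finally show "(A *\<^sub>v v) $ i = (of_real r \<cdot>\<^sub>v v) $ i" using i v unfolding v_def by simp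
  qed (use A v in auto)
  ultimately show ?thesis unfolding eigenvalue_def eigenvector_def using A v by auto
qed



lemma fmix_pos: assumes x: "x \<ge> 21/5" and p: "p_m m x \<ge> 0"
  shows "f_mix m x > 0"
proof -
  define l where "l = x^5 - 2*x^4 - 6*x^3 + 6*x^2 + 7*x - 2"
  define Ap where "Ap = x^7 - 2*x^6 + 3*x^5 - 24*x^4 - 61*x^3 + 84*x^2 + 90*x - 28"
  define q where "q = 2*x^2 + 2*x - 1"
  have l: "l > 0" using pos_l[OF x] l_def by simp
  have eqD: "Ap * q - l * (2*x^4 + 4*x - 2) = 2*x^8 + 13*x^7 - 56*x^6 - 177*x^5 + 94*x^4 + 373*x^3 + 24*x^2 - 124*x + 24"
    unfolding Ap_def q_def l_def by (simp add: eval_nat_numeral field_simps)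
  have D: "Ap * q - l * (2*x^4 + 4*x - 2) > 0" using pos_D[OF x] unfolding eqD .
  have "x^2 \<ge> 0" by simp
  hence q: "q > 0" unfolding q_def using x by linarith
  have f: "f_mix m x = Ap - real m * l" unfolding f_mix_def Ap_def l_def by (simp add: algebra_simps)
  have mq: "real m * q \<le> 2*x^4 + 4*x - 2" using p unfolding p_m_def q_def by (simp add: algebra_simps)
  have "l * (real m * q) \<le> l * (2*x^4 + 4*x - 2)" using mult_left_mono[OF mq] l by simp
  hence "f_mix m x * q > 0" using D unfolding f by (simp add: algebra_simps)
  thus ?thesis using q by (simp add: zero_less_mult_iff)
qed

lemma pm_large: assumes m: "m \<ge> 18" and x: "x \<ge> real m" shows "p_m m x \<ge> 0"
proof -
  have x18: "x \<ge> 18" using m x by linarith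
  have "real m * x^2 \<le> x * x^2" using x by (intro mult_right_mono) auto
  moreover have "(real m - 2) * x \<le> x * x" using x x18 by (intro mult_right_mono) auto
  moreover have "x * x \<le> x^2 * x" using x18 by (intro mult_right_mono) (auto simp: power2_eq_square)
  moreover have "x^2 * (x + 1) \<le> x^2 * x^2"
    using x18 by (intro mult_left_mono) (auto simp: power2_eq_square intro: order_trans[of _ "2*x"])
  moreover have "real m / 2 - 1 \<ge> 0" using m by simp
  ultimately show ?thesis unfolding p_m_def by (simp add: algebra_simps eval_nat_numeral)
qed


lemma fmix_neg: assumes "m \<ge> 18" shows "f_mix m (21/5) < 0"
proof -
  have "f_mix m (21/5) = 456322531/78125 - real m * (1166516/3125)"
    unfolding f_mix_def by (simp add: power_divide field_simps)
  thus ?thesis using assms by simp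
qed
definition Pmix :: "nat \<Rightarrow> real poly" where
  "Pmix m = [:2*real m - 28, 90 - 7*real m, 84 - 6*real m, 6*real m - 61, 2*real m - 24, 3 - real m, -2, 1:]"

lemma Pmix: "poly (Pmix m) x = f_mix m x" "Pmix m \<noteq> 0"
  unfolding Pmix_def f_mix_def by (simp_all add: algebra_simps eval_nat_numeral)

lemma fmix_finite: "finite {x. f_mix m x = 0}"
  using poly_roots_finite[OF Pmix(2)[of m]] by (simp add: Pmix(1))

lemma fmix_root: assumes m: "m \<ge> 18"
  shows "\<exists>x. 21/5 \<le> x \<and> f_mix m x = 0"
proof -
  have "f_mix m (real m) > 0" using fmix_pos[OF _ pm_large[OF m order_refl]] m by simp
  moreover have cont: "continuous_on {21/5..real m} (f_mix m)"
    unfolding f_mix_def by (intro continuous_intros)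
  ultimately obtain x where "21/5 \<le> x" "x \<le> real m" "f_mix m x = 0"
    using IVT'[of "f_mix m" "21/5" 0 "real m"] fmix_neg[OF m] m by force
  thus ?thesis by auto
qed

lemma pm_finite: "finite {x. p_m m x = 0}"
proof -
  have "[:real m/2 - 1, 2 - real m, - real m, 0, 1:] \<noteq> 0" by simp
  from poly_roots_finite[OF this] show ?thesis
    unfolding p_m_def by (simp add: algebra_simps eval_nat_numeral)
qed

lemma pm_root: assumes m: "m \<ge> 18" shows "\<exists>x. p_m m x = 0"
proof -
  have "continuous_on {0..1} (p_m m)" unfolding p_m_def by (intro continuous_intros)
  moreover have "p_m m 1 \<le> 0" "0 \<le> p_m m 0" using m unfolding p_m_def by simp_all
  ultimately show ?thesis using IVT2'[of "p_m m" 1 0 0] by force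
qed



lemma nb:
  assumes m: "m \<ge> 18" and i: "i < m - 6"
  shows "{j. j < m - 6 \<and> {i,j} \<in> mix_edges m} =
    (if i = 0 then {1,2,3,4,5} \<union> {8..<m-6} else if i = 1 then {0,2,3,4,6}
     else if i = 2 then {0,1,3,4} else if i = 3 then {0,1,2,4} else if i = 4 then {0,1,2,3}
     else if i = 5 then {0,7} else if i = 6 then {1,7} else if i = 7 then {5,6} else {0})"
  using m i unfolding mix_edges_def by (auto simp: doubleton_eq_iff)

definition wv :: "real \<Rightarrow> nat \<Rightarrow> real" where
  "wv r j = (let l = r^5 - 2*r^4 - 6*r^3 + 6*r^2 + 7*r - 2 in
     if j = 0 then r * l
     else if j = 1 then r^5 + r^4 - 2*r^3 - r^2 - 2*r
     else if j \<in> {2,3,4} then r^5 + r^4 - 3*r^3 - 2*r^2 + 2*r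
     else if j = 5 then r^5 - 2*r^4 - 5*r^3 + 5*r^2 + 4*r
     else if j = 6 then r^4 + 2*r^3 - 3*r^2 - 4*r
     else if j = 7 then r^4 - r^3 - 3*r^2 + 2*r
     else l)"

lemma wv_pos: "r \<ge> 21/5 \<Longrightarrow> wv r j > 0"
  using pos_l[of r] pos_a[of r] pos_b[of r] pos_z[of r] pos_x[of r] pos_y[of r]
  unfolding wv_def Let_def by auto

lemma wv_eq:
  assumes m: "m \<ge> 18" and i: "i < m - 6" and f: "f_mix m r = 0"
  shows "(\<Sum>j<m-6. (if {i,j} \<in> mix_edges m then 1 else 0) * wv r j) = r * wv r i"
proof -
  have "(\<Sum>j<m-6. (if {i,j} \<in> mix_edges m then 1 else 0) * wv r j)
      = (\<Sum>j\<in>{j. j < m - 6 \<and> {i,j} \<in> mix_edges m}. wv r j)"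
  proof -
    have "(\<Sum>j<m-6. (if {i,j} \<in> mix_edges m then 1 else 0) * wv r j)
        = (\<Sum>j<m-6. if {i,j} \<in> mix_edges m then wv r j else 0)" by (intro sum.cong) auto
    also have "\<dots> = (\<Sum>j\<in>{j\<in>{..<m-6}. {i,j} \<in> mix_edges m}. wv r j)"
      by (rule sum.inter_filter[symmetric]) simp
    also have "{j\<in>{..<m-6}. {i,j} \<in> mix_edges m} = {j. j < m - 6 \<and> {i,j} \<in> mix_edges m}" by auto
    finally show ?thesis .
  qed
  also have "\<dots> = r * wv r i"
  proof (cases "i = 0")
    case True
    have L: "(\<Sum>j\<in>{8..<m-6}. wv r j) = real (m - 14) * wv r 8"
    proof -
      have "(\<Sum>j\<in>{8..<m-6}. wv r j) = (\<Sum>j\<in>{8..<m-6}. wv r 8)"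
        by (intro sum.cong) (auto simp: wv_def)
      thus ?thesis by simp
    qed
    have "(\<Sum>j\<in>{1,2,3,4,5} \<union> {8..<m-6}. wv r j) = (\<Sum>j\<in>{1,2,3,4,5}. wv r j) + (\<Sum>j\<in>{8..<m-6}. wv r j)"
      by (intro sum.union_disjoint) auto
    also have "\<dots> = r * wv r 0"
      using f m unfolding L by (simp add: wv_def f_mix_def of_nat_diff algebra_simps eval_nat_numeral)
    finally show ?thesis using nb[OF m i] True by simp
  next
    case False
    then show ?thesis using nb[OF m i] by (auto simp: wv_def algebra_simps eval_nat_numeral)
  qed
  finally show ?thesis .
qed

lemma A_carrier: "mix_adj_mat m \<in> carrier_mat (m-6) (m-6)"
  unfolding mix_adj_mat_def by simp

lemma A_entry: "i < m-6 \<Longrightarrow> j < m-6 \<Longrightarrow>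
  mix_adj_mat m $$ (i,j) = of_real (if {i,j} \<in> mix_edges m then 1 else 0)"
  unfolding mix_adj_mat_def by simp

theorem proposition6p4:
  fixes m :: nat
  assumes "even m" and "m \<ge> 18"
  shows "spectral_radius (mix_adj_mat m) = Max {x. f_mix m x = 0}
         \<and> spectral_radius (mix_adj_mat m) < rho' m"
proof -
  have m: "m \<ge> 18" by fact
  define r where "r = Max {x. f_mix m x = 0}"
  obtain x0 where x0: "21/5 \<le> x0" "f_mix m x0 = 0" using fmix_root[OF m] by auto
  have ne: "{x. f_mix m x = 0} \<noteq> {}" using x0 by auto
  have rroot: "f_mix m r = 0" using Max_in[OF fmix_finite ne] unfolding r_def by simp
  have "x0 \<le> r" unfolding r_def using Max_ge[OF fmix_finite[of m], of x0] x0 by simp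
  hence rge: "r \<ge> 21/5" using x0 by linarith
  define A where "A = mix_adj_mat m"
  define c where "c = (\<lambda>i j. if {i,j} \<in> mix_edges m then 1 else (0::real))"
  have A: "A \<in> carrier_mat (m-6) (m-6)" unfolding A_def by (rule A_carrier)
  have Ac: "\<And>i j. i<m-6 \<Longrightarrow> j<m-6 \<Longrightarrow> A $$ (i,j) = of_real (c i j)"
    unfolding A_def c_def by (rule A_entry)
  have Aw: "\<And>i. i<m-6 \<Longrightarrow> (\<Sum>j<m-6. c i j * wv r j) = r * wv r i"
    unfolding c_def using wv_eq[OF m _ rroot] by blast
  have ev: "eigenvalue A (of_real r)"
    by (rule eigen_of_real[OF A Ac _ _ Aw, of 0]) (use m wv_pos[OF rge, of 0] in auto)
  have bound: "norm lam \<le> r" if "lam \<in> spectrum A" for lam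
  proof -
    from that obtain v where "eigenvector A v lam" unfolding spectrum_def eigenvalue_def by auto
    from collatz[OF A Ac _ _ Aw this] wv_pos[OF rge] show ?thesis unfolding c_def by auto
  qed
  have rin: "r \<in> norm ` spectrum A"
  proof
    show "r = norm (complex_of_real r)" using rge by simp
    show "complex_of_real r \<in> spectrum A" using ev unfolding spectrum_def by simp
  qed
  have sr: "spectral_radius A = r"
    unfolding spectral_radius_def
    by (rule Max_eqI) (use card_finite_spectrum(1)[OF A] bound rin in auto)
  have "r < rho' m"
  proof (rule ccontr)
    assume "\<not> r < rho' m"
    hence le: "rho' m \<le> r" by simp
    have neP: "{x. p_m m x = 0} \<noteq> {}" using pm_root[OF m] by auto
    have maxP: "x \<le> rho' m" if "p_m m x = 0" for x
      unfolding rho'_def using Max_ge[OF pm_finite] that by simp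
    have "p_m m r \<ge> 0"
    proof (rule ccontr)
      assume neg: "\<not> p_m m r \<ge> 0"
      define K where "K = max r (real m)"
      have "p_m m K \<ge> 0" using pm_large[OF m] unfolding K_def by simp
      moreover have "continuous_on {r..K} (p_m m)" unfolding p_m_def by (intro continuous_intros)
      ultimately obtain y where y: "r \<le> y" "y \<le> K" "p_m m y = 0"
        using IVT'[of "p_m m" r 0 K] neg unfolding K_def by force
      have "y \<le> r" using maxP[OF y(3)] le by simp
      hence "y = r" using y by simp
      thus False using y neg by simp
    qed
    from fmix_pos[OF rge this] rroot show False by simp
  qed
  thus ?thesis using sr unfolding A_def r_def by simp
qed

end
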